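(* Let $T$ be a basic maximal rigid object of $\mathcal{C}_n$. (i) If $(T_i;T_j,T_k)$ is a non-degenerate $T$-subwing triple, there are nonzero $\mathcal{T}$-maps $f_{ji}:T_j\to T_i$ and $f_{ik}:T_i\to T_k$, and these maps are irreducible in $\operatorname{add}T$. (ii) If $(T_i;T_j,0)$ is a degenerate $T$-subwing triple, there is a nonzero $\mathcal{T}$-map $f_{ji}:T_j\to T_i$ which is irreducible in $\operatorname{add}T$; similarly, if $(T_i;0,T_k)$ is a degenerate $T$-subwing triple, there is a nonzero $\mathcal{T}$-map $f_{ik}:T_i\to T_k$ which is irreducible in $\operatorname{add}T$. (iii) There are no irreducible $\mathcal{T}$-maps in $\operatorname{add}T$ (between indecomposable summands of $T$) other than those described in (i) and (ii). (iv) If $(T_i;T_j,T_k)$ is a non-degenerate $T$-subwing triple, then $f_{ik}\circ f_{ji}=0$.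
   Context: Let $k$ be algebraically closed, $n\ge2$, $\mathcal{T}_n$ the tube of rank $n$ (finite-dimensional nilpotent representations of the cyclically oriented $\tilde A_{n-1}$-quiver; AR-translation $\tau$), $\mathcal{C}_n=D^b(\mathcal{T}_n)/\tau^{-1}[1]$ the cluster tube, with indecomposables identified with those of $\mathcal{T}_n$. Indecomposables have coordinates $(a,b)$, $a\in\mathbb{Z}/n$, $b\ge1$ the quasilength, with $\tau(a,b)=(a-1,b)$ and irreducible maps $(a,b)\to(a,b+1)$ and $(a,b)\to(a+1,b-1)$. For indecomposables $X,Y$, $\operatorname{Hom}_{\mathcal{C}_n}(X,Y)=\operatorname{Hom}_{\mathcal{T}_n}(X,Y)\oplus\operatorname{Hom}_{D^b}(X,\tau^{-1}Y[1])$; elements of the first summand are $\mathcal{T}$-maps. $T$ is maximal rigid if $\operatorname{Ext}^1_{\mathcal{C}_n}(T,T)=0$ and $\operatorname{Ext}^1(T\oplus X,T\oplus X)=0$ implies $X\in\operatorname{add}T$. A non-degenerate subwing triple $(X;Y,Z)$: $X=(a,b)$ with $3\le b\le n-1$, $Y=(a,c)$, $Z=(a+c+1,b-c-1)$ for some $1\le c\le b-2$. A degenerate subwing triple $(X;Y,Z)$: $X=(a,b)$, $2\le b\le n-1$, and either $Y=(a,b-1)$, $Z=0$, or $Y=0$, $Z=(a+1,b-1)$. A $T$-subwing triple is a subwing triple whose nonzero members are all indecomposable summands of $T$. A map between indecomposable summands of $T$ is irreducible in $\operatorname{add}T$ if it is a non-isomorphism that does not factor as a sum of composites through other objects of $\operatorname{add}T$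 via non-isomorphisms (i.e. it is nonzero in the radical modulo the square of the radical of $\operatorname{add}T$). *)

theory Defs
  imports "HOL-Computational_Algebra.Polynomial"
begin

text \<open>An indecomposable is a pair (a,b) with a < n (a in Z/n) and b \<ge> 1 the quasilength.
Concretely (a,b) is the uniserial nilpotent representation of the cyclic quiver
with basis e_0,...,e_(b-1), e_i sitting at vertex (a+i) mod n, the arrows
sending e_i to e_(i-1) and e_0 to 0.  Thus (a,b) -> (a,b+1) (inclusion) and
(a,b) -> (a+1,b-1) (quotient by the socle) are the irreducible maps.\<close>

type_synonym ind = "nat \<times> nat"

definition valid_ind :: "nat \<Rightarrow> ind \<Rightarrow> bool" where
  "valid_ind n X \<longleftrightarrow> fst X < n \<and> 1 \<le> snd X"

definition tau :: "nat \<Rightarrow> ind \<Rightarrow> ind" where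
  "tau n X = ((fst X + n - 1) mod n, snd X)"

text \<open>Basis of Hom_T(X,Y): a homomorphism out of the uniserial X is determined by
the image of its top e_(b-1) (at vertex a+b-1), which may be any element of Y at
that vertex killed by paths of length b.  The basis vector j sends the top of X
to the basis element f_j of Y.\<close>

definition hom_basis :: "nat \<Rightarrow> ind \<Rightarrow> ind \<Rightarrow> nat set" where
  "hom_basis n X Y = {j. j < snd Y \<and> j < snd X \<and>
      (fst Y + j) mod n = (fst X + snd X - 1) mod n}"

definition tmap :: "nat \<Rightarrow> ind \<Rightarrow> ind \<Rightarrow> (nat \<Rightarrow> 'k::field) \<Rightarrow> bool" where
  "tmap n X Y f \<longleftrightarrow> (\<forall>j. j \<notin> hom_basis n X Y \<longrightarrow> f j = 0)"

definition tcomp :: "nat \<Rightarrow> ind \<Rightarrow> ind \<Rightarrow> ind \<Rightarrow> (nat \<Rightarrow> 'k::field) \<Rightarrow> (nat \<Rightarrow> 'k) \<Rightarrow> nat \<Rightarrow> 'k" where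
  "tcomp n X Y Z g f = (\<lambda>m. \<Sum>j\<in>hom_basis n X Y. \<Sum>l\<in>hom_basis n Y Z.
       (if l + j + 1 = snd Y + m then f j * g l else 0))"

text \<open>Radical maps between indecomposables: non-isomorphisms.  Only for X = Y
is there an isomorphism, and the identity is the basis vector snd X - 1.\<close>

definition trad :: "nat \<Rightarrow> ind \<Rightarrow> ind \<Rightarrow> (nat \<Rightarrow> 'k::field) \<Rightarrow> bool" where
  "trad n X Y f \<longleftrightarrow> tmap n X Y f \<and> (X \<noteq> Y \<or> f (snd X - 1) = 0)"

definition trad2 :: "nat \<Rightarrow> ind set \<Rightarrow> ind \<Rightarrow> ind \<Rightarrow> (nat \<Rightarrow> 'k::field) \<Rightarrow> bool" where
  "trad2 n T X Y f \<longleftrightarrow> (\<exists>(m::nat) Zs hs gs.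
      (\<forall>t<m. Zs t \<in> T \<and> trad n X (Zs t) (hs t) \<and> trad n (Zs t) Y (gs t)) \<and>
      f = (\<lambda>i. \<Sum>t<m. tcomp n X (Zs t) Y (gs t) (hs t) i))"

definition irreducible_addT :: "nat \<Rightarrow> ind set \<Rightarrow> ind \<Rightarrow> ind \<Rightarrow> (nat \<Rightarrow> 'k::field) \<Rightarrow> bool" where
  "irreducible_addT n T X Y f \<longleftrightarrow> X \<in> T \<and> Y \<in> T \<and> trad n X Y f \<and> \<not> trad2 n T X Y f"

text \<open>Ext^1 in the cluster tube: Ext^1_C(X,Y) = Ext^1_T(X,Y) + Hom_T(X, tau Y), and
Ext^1_T(X,Y) = D Hom_T(Y, tau X) (Serre duality in the tube).\<close>

definition ext1_zero :: "nat \<Rightarrow> ind \<Rightarrow> ind \<Rightarrow> bool" where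
  "ext1_zero n X Y \<longleftrightarrow> hom_basis n Y (tau n X) = {} \<and> hom_basis n X (tau n Y) = {}"

definition rigid_set :: "nat \<Rightarrow> ind set \<Rightarrow> bool" where
  "rigid_set n T \<longleftrightarrow> (\<forall>X\<in>T. \<forall>Y\<in>T. ext1_zero n X Y)"

text \<open>A basic object is given by its (pairwise non-isomorphic) indecomposable summands.\<close>

definition basic_maximal_rigid :: "nat \<Rightarrow> ind set \<Rightarrow> bool" where
  "basic_maximal_rigid n T \<longleftrightarrow> finite T \<and> (\<forall>X\<in>T. valid_ind n X) \<and> rigid_set n T \<and>
     (\<forall>X. valid_ind n X \<and> rigid_set n (insert X T) \<longrightarrow> X \<in> T)"

definition nondeg_subwing :: "nat \<Rightarrow> ind \<Rightarrow> ind \<Rightarrow> ind \<Rightarrow> bool" where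
  "nondeg_subwing n X Y Z \<longleftrightarrow> (\<exists>a b c. X = (a, b) \<and> a < n \<and> 3 \<le> b \<and> b \<le> n - 1 \<and>
      1 \<le> c \<and> c \<le> b - 2 \<and> Y = (a, c) \<and> Z = ((a + c + 1) mod n, b - c - 1))"

text \<open>None stands for the zero object.\<close>

definition deg_subwing :: "nat \<Rightarrow> ind \<Rightarrow> ind option \<Rightarrow> ind option \<Rightarrow> bool" where
  "deg_subwing n X Y Z \<longleftrightarrow> (\<exists>a b. X = (a, b) \<and> a < n \<and> 2 \<le> b \<and> b \<le> n - 1 \<and>
      ((Y = Some (a, b - 1) \<and> Z = None) \<or> (Y = None \<and> Z = Some ((a + 1) mod n, b - 1))))"

definition T_subwing :: "nat \<Rightarrow> ind set \<Rightarrow> ind \<Rightarrow> ind option \<Rightarrow> ind option \<Rightarrow> bool" where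
  "T_subwing n T X Y Z \<longleftrightarrow> X \<in> T \<and> set_option Y \<subseteq> T \<and> set_option Z \<subseteq> T \<and>
     ((\<exists>y z. Y = Some y \<and> Z = Some z \<and> nondeg_subwing n X y z) \<or> deg_subwing n X Y Z)"

end

theory Submission
  imports Defs
begin

lemma mod3: "(x::nat) < 3*n \<Longrightarrow> x mod n = (if x < n then x else if x < 2*n then x - n else x - 2*n)"
proof -
  assume h: "x < 3*n"
  show ?thesis
  proof (cases "x < n")
    case True thus ?thesis by simp
  next
    case F1: False
    show ?thesis
    proof (cases "x < 2*n")
      case True
      have "x mod n = (x - n) mod n" using F1 by (simp add: le_mod_geq)
      also have "\<dots> = x - n" using True by simp
      finally show ?thesis using F1 True by simp
    next
      case False
      have "x mod n = (x - n) mod n" using F1 by (simp add: le_mod_geq)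
      also have "\<dots> = (x - n - n) mod n" using False by (simp add: le_mod_geq)
      also have "\<dots> = x - 2*n" using h False by simp
      finally show ?thesis using F1 False by simp
    qed
  qed
qed

definition D :: "nat \<Rightarrow> nat \<Rightarrow> nat \<Rightarrow> nat \<Rightarrow> nat" where
  "D n a b a' = (a + b - 1 + n - a') mod n"

lemma Dval: "a < n \<Longrightarrow> a' < n \<Longrightarrow> 1 \<le> b \<Longrightarrow> b \<le> n \<Longrightarrow>
  D n a b a' = (if a + b - 1 + n - a' < n then a + b - 1 + n - a' else if a + b - 1 + n - a' < 2*n
     then a + b - 1 - a' else a + b - 1 - a' - n)"
  unfolding D_def by (subst mod3) auto

lemma hb: assumes "fst Y < n" "1 \<le> snd X" "snd X \<le> n"
  shows "hom_basis n X Y = (if D n (fst X) (snd X) (fst Y) < snd X \<and> D n (fst X) (snd X) (fst Y) < snd Y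
          then {D n (fst X) (snd X) (fst Y)} else {})"
proof -
  let ?d = "D n (fst X) (snd X) (fst Y)"
  have n0: "0 < n" using assms by linarith
  have key: "(fst Y + ?d) mod n = (fst X + snd X - 1) mod n"
  proof -
    have "(fst Y + ?d) mod n = (fst Y + (fst X + snd X - 1 + n - fst Y)) mod n"
      unfolding D_def by (simp add: mod_add_right_eq)
    also have "fst Y + (fst X + snd X - 1 + n - fst Y) = (fst X + snd X - 1) + n" using assms by simp
    finally show ?thesis by simp
  qed
  have "j \<in> hom_basis n X Y \<longleftrightarrow> j = ?d \<and> ?d < snd X \<and> ?d < snd Y" for j
  proof
    assume j: "j \<in> hom_basis n X Y"
    hence jl: "j < snd X" "j < snd Y" "(fst Y + j) mod n = (fst X + snd X - 1) mod n"
      unfolding hom_basis_def by auto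
    have e: "(fst Y + j) mod n = (fst Y + ?d) mod n" using key jl by simp
    have "j < n" "?d < n" using jl assms n0 unfolding D_def by auto
    hence "j = ?d" using e assms by (simp add: mod3 split: if_splits)
    thus "j = ?d \<and> ?d < snd X \<and> ?d < snd Y" using jl by simp
  next
    assume "j = ?d \<and> ?d < snd X \<and> ?d < snd Y"
    thus "j \<in> hom_basis n X Y" using key unfolding hom_basis_def by auto
  qed
  thus ?thesis by auto
qed

definition rel :: "nat \<Rightarrow> nat \<Rightarrow> nat \<Rightarrow> nat" where "rel n a u = (u + n - a) mod n"

lemma rel_lin: "a < n \<Longrightarrow> u < n \<Longrightarrow> rel n a u = (if a \<le> u then u - a else u + n - a)"
  unfolding rel_def by (subst mod3) auto

lemma rel_lt: "0 < n \<Longrightarrow> rel n a u < n" unfolding rel_def by simp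

lemma hb_rel: assumes "a < n" "a' < n" "1 \<le> b" "b \<le> n"
  shows "hom_basis n (a,b) (a',b') = (if rel n a a' + 1 \<le> b \<and> b \<le> rel n a a' + b' then {b - 1 - rel n a a'} else {})"
proof -
  have "D n a b a' = (if rel n a a' + 1 \<le> b then b - 1 - rel n a a' else b - 1 + n - rel n a a')"
    using assms unfolding Dval[OF assms] rel_lin[OF assms(1,2)] by auto
  moreover have "rel n a a' < n" using assms by (simp add: rel_lt)
  ultimately show ?thesis using assms by (auto simp add: hb) 
qed

definition cmp :: "nat \<Rightarrow> nat \<Rightarrow> nat \<Rightarrow> nat \<Rightarrow> bool" where
  "cmp n r b b' \<longleftrightarrow> \<not> (n \<le> r + b' \<and> b' + r + 1 \<le> n + b) \<and>
     \<not> ((if r = 0 then n - 1 else r - 1) + 1 \<le> b \<and> b \<le> (if r = 0 then n - 1 else r - 1) + b')"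

lemma tau_eq: "a < n \<Longrightarrow> tau n (a,b) = (if a = 0 then n - 1 else a - 1, b)"
  unfolding tau_def by (subst mod3) auto

lemma ext_rel: assumes "a < n" "a' < n" "1 \<le> b" "b \<le> n" "1 \<le> b'" "b' \<le> n"
  shows "ext1_zero n (a,b) (a',b') \<longleftrightarrow> cmp n (rel n a a') b b'"
proof -
  define ta where "ta = (if a = 0 then n - 1 else a - 1)"
  define ta' where "ta' = (if a' = 0 then n - 1 else a' - 1)"
  have t1: "ta < n" "ta' < n" using assms unfolding ta_def ta'_def by auto
  have "ext1_zero n (a,b) (a',b') \<longleftrightarrow>
     \<not> (rel n a' ta + 1 \<le> b' \<and> b' \<le> rel n a' ta + b) \<and>
     \<not> (rel n a ta' + 1 \<le> b \<and> b \<le> rel n a ta' + b')"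
    unfolding ext1_zero_def tau_eq[OF assms(1)] tau_eq[OF assms(2)] ta_def[symmetric] ta'_def[symmetric]
    using assms t1 by (simp add: hb_rel)
  also have "\<dots> \<longleftrightarrow> cmp n (rel n a a') b b'"
    unfolding cmp_def rel_lin[OF assms(1,2)] rel_lin[OF assms(2) t1(1)] rel_lin[OF assms(1) t1(2)]
    using assms unfolding ta_def ta'_def by (auto split: if_splits)
  finally show ?thesis .
qed

lemma rel_self: "a < n \<Longrightarrow> rel n a a = 0" by (simp add: rel_lin)
lemma rel0: "a < n \<Longrightarrow> u < n \<Longrightarrow> rel n a u = 0 \<longleftrightarrow> u = a" by (auto simp add: rel_lin split: if_splits)
lemma rel_shift: "a < n \<Longrightarrow> s < n \<Longrightarrow> rel n a ((a + s) mod n) = s"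
  by (subst mod3[of "a+s"], simp, auto simp add: rel_lin)
lemma rel_sub: "a < n \<Longrightarrow> w < n \<Longrightarrow> z < n \<Longrightarrow>
   rel n w z = (if rel n a w \<le> rel n a z then rel n a z - rel n a w else rel n a z + n - rel n a w)"
  by (simp add: rel_lin split: if_splits; arith)

lemma ss: "(\<Sum>j\<in>{x}. G j) = G x" by simp

lemma tcomp_eval:
  fixes g h :: "nat \<Rightarrow> 'k::field"
  assumes "a < n" "w < n" "a' < n" "1 \<le> b" "b \<le> n" "1 \<le> v" "v \<le> n"
  shows "tcomp n (a,b) (w,v) (a',b') g h m = (if rel n a w + 1 \<le> b \<and> b \<le> rel n a w + v \<and>
     rel n w a' + 1 \<le> v \<and> v \<le> rel n w a' + b' \<and> (v - 1 - rel n w a') + (b - 1 - rel n a w) + 1 = v + m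
     then h (b - 1 - rel n a w) * g (v - 1 - rel n w a') else 0)"
proof -
  define s where "s = rel n a w"
  define t where "t = rel n w a'"
  have e1: "hom_basis n (a,b) (w,v) = (if s + 1 \<le> b \<and> b \<le> s + v then {b - 1 - s} else {})"
    unfolding s_def using assms by (simp add: hb_rel)
  have e2: "hom_basis n (w,v) (a',b') = (if t + 1 \<le> v \<and> v \<le> t + b' then {v - 1 - t} else {})"
    unfolding t_def using assms by (simp add: hb_rel)
  have "tcomp n (a,b) (w,v) (a',b') g h m = (\<Sum>j\<in>hom_basis n (a,b) (w,v). \<Sum>l\<in>hom_basis n (w,v) (a',b').
       (if l + j + 1 = v + m then h j * g l else 0))" unfolding tcomp_def by simp
  also have "\<dots> = (if s + 1 \<le> b \<and> b \<le> s + v \<and>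
     t + 1 \<le> v \<and> v \<le> t + b' \<and> (v - 1 - t) + (b - 1 - s) + 1 = v + m
     then h (b - 1 - s) * g (v - 1 - t) else 0)"
  proof (cases "s + 1 \<le> b \<and> b \<le> s + v")
    case c1: True
    show ?thesis
    proof (cases "t + 1 \<le> v \<and> v \<le> t + b'")
      case True
      show ?thesis unfolding e1 e2 using c1 True by (simp only: if_True ss simp_thms)
    next
      case False
      show ?thesis unfolding e1 e2 using c1 False by (simp only: if_True if_False ss simp_thms sum.empty sum.neutral_const) (simp only: if_False simp_thms de_Morgan_conj conj_assoc[symmetric] split: if_split, blast)
    qed
  next
    case False
    show ?thesis unfolding e1 e2 using False by (simp only: if_True if_False ss simp_thms sum.empty) (simp only: if_False simp_thms de_Morgan_conj conj_assoc[symmetric] split: if_split, blast)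
  qed
  finally show ?thesis unfolding s_def t_def .
qed

lemma Tmem: assumes "basic_maximal_rigid n T" "X \<in> T" "2 \<le> n"
  shows "fst X < n \<and> 1 \<le> snd X \<and> snd X \<le> n - 1"
proof -
  have v: "fst X < n" "1 \<le> snd X" using assms unfolding basic_maximal_rigid_def valid_ind_def by auto
  have e: "ext1_zero n X X" using assms unfolding basic_maximal_rigid_def rigid_set_def by auto
  show ?thesis
  proof (rule ccontr)
    assume "\<not> ?thesis"
    hence b: "n \<le> snd X" using v by auto
    have "((fst X + n - 1) mod n + (snd X - n)) mod n = (fst X + n - 1 + (snd X - n)) mod n"
      by (simp add: mod_add_left_eq)
    also have "fst X + n - 1 + (snd X - n) = fst X + snd X - 1" using b v assms(3) by simp
    finally have "snd X - n \<in> hom_basis n X (tau n X)"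
      unfolding hom_basis_def tau_def using b v assms(3) by auto
    thus False using e unfolding ext1_zero_def by auto
  qed
qed

lemma Text: assumes "basic_maximal_rigid n T" "X \<in> T" "Y \<in> T" "2 \<le> n"
  shows "cmp n (rel n (fst X) (fst Y)) (snd X) (snd Y)"
proof -
  have e: "ext1_zero n X Y" using assms unfolding basic_maximal_rigid_def rigid_set_def by auto
  have "fst X < n \<and> 1 \<le> snd X \<and> snd X \<le> n - 1" "fst Y < n \<and> 1 \<le> snd Y \<and> snd Y \<le> n - 1"
    using Tmem assms by blast+
  hence "ext1_zero n (fst X, snd X) (fst Y, snd Y) = cmp n (rel n (fst X) (fst Y)) (snd X) (snd Y)"
    using ext_rel[of "fst X" n "fst Y" "snd X" "snd Y"] by linarith
  thus ?thesis using e by simp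
qed

lemma nontrad2:
  fixes f :: "nat \<Rightarrow> 'k::field"
  assumes "f d \<noteq> 0"
    "\<And>W h g. W \<in> T \<Longrightarrow> trad n A W h \<Longrightarrow> trad n W B g \<Longrightarrow> tcomp n A W B (g::nat \<Rightarrow> 'k) h d = 0"
  shows "\<not> trad2 n T A B f"
proof
  assume "trad2 n T A B f"
  then have "\<exists>(m::nat) Zs hs gs. (\<forall>t<m. Zs t \<in> T \<and> trad n A (Zs t) (hs t) \<and> trad n (Zs t) B (gs t)) \<and>
      f = (\<lambda>i. \<Sum>t<m. tcomp n A (Zs t) B (gs t) (hs t) i)" unfolding trad2_def .
  then obtain m :: nat and Zs hs gs where h1: "\<forall>t<m. Zs t \<in> T \<and> trad n A (Zs t) (hs t) \<and> trad n (Zs t) B (gs t)"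
    and h2: "f = (\<lambda>i. \<Sum>t<m. tcomp n A (Zs t) B (gs t) (hs t) i)" by blast
  have "f d = (\<Sum>t<m. tcomp n A (Zs t) B (gs t) (hs t) d)" using h2 by simp
  also have "\<dots> = 0" using h1 assms(2) by (intro sum.neutral) blast
  finally show False using assms(1) by simp
qed

lemma sum1: "(\<Sum>t<(1::nat). c) = (c::'a::comm_monoid_add)" by simp

lemma factor:
  fixes x :: "'k::field"
  assumes "(w,v) \<in> T" "a < n" "w < n" "a' < n" "1 \<le> b" "b \<le> n" "1 \<le> v" "v \<le> n"
    "rel n a w + 1 \<le> b" "b \<le> rel n a w + v" "rel n w a' + 1 \<le> v" "v \<le> rel n w a' + b'"
    "d = b - 1 - rel n a w - rel n w a'" "(w,v) \<noteq> (a,b)" "(w,v) \<noteq> (a',b')"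
    "rel n a w + rel n w a' \<le> b - 1"
  shows "trad2 n T (a,b) (a',b') (\<lambda>i. if i = d then x else 0)"
proof -
  define s where "s = rel n a w"
  define t where "t = rel n w a'"
  define h where "h = (\<lambda>i. if i = b - 1 - s then x else (0::'k))"
  define g where "g = (\<lambda>i. if i = v - 1 - t then 1 else (0::'k))"
  have hb1: "hom_basis n (a,b) (w,v) = {b - 1 - s}" using assms unfolding s_def by (simp add: hb_rel)
  have hb2: "hom_basis n (w,v) (a',b') = {v - 1 - t}" using assms unfolding t_def by (simp add: hb_rel)
  have th: "trad n (a,b) (w,v) h" unfolding trad_def tmap_def hb1 h_def
  proof
    show "\<forall>j. j \<notin> {b - 1 - s} \<longrightarrow> (if j = b - 1 - s then x else 0) = 0" by simp
    show "(a, b) \<noteq> (w, v) \<or> (if snd (a, b) - 1 = b - 1 - s then x else 0) = 0" using assms(14) by metis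
  qed
  have tg: "trad n (w,v) (a',b') g" unfolding trad_def tmap_def hb2 g_def
  proof
    show "\<forall>j. j \<notin> {v - 1 - t} \<longrightarrow> (if j = v - 1 - t then 1 else 0) = (0::'k)" by simp
    show "(w, v) \<noteq> (a', b') \<or> (if snd (w, v) - 1 = v - 1 - t then 1 else 0) = (0::'k)" using assms(15) by metis
  qed
  have "(\<lambda>i. if i = d then x else 0) = (\<lambda>i. tcomp n (a,b) (w,v) (a',b') g h i)"
  proof
    fix i
    show "(if i = d then x else 0) = tcomp n (a,b) (w,v) (a',b') g h i"
    proof -
      have c: "s + 1 \<le> b \<and> b \<le> s + v \<and> t + 1 \<le> v \<and> v \<le> t + b'" using assms unfolding s_def t_def by simp
      have eq: "((v - 1 - t) + (b - 1 - s) + 1 = v + i) \<longleftrightarrow> i = d" using c assms(13,16) unfolding s_def[symmetric] t_def[symmetric] by arith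
      show ?thesis unfolding tcomp_eval[OF assms(2,3,4,5,6,7,8)] s_def[symmetric] t_def[symmetric]
        using c eq unfolding h_def g_def by simp
    qed
  qed
  also have "\<dots> = (\<lambda>i. \<Sum>t<(1::nat). tcomp n (a,b) ((\<lambda>_. (w,v)) t) (a',b') ((\<lambda>_. g) t) ((\<lambda>_. h) t) i)"
    by (rule ext, simp only: sum1)
  finally have "(\<lambda>i. if i = d then x else 0) = (\<lambda>i. \<Sum>t<(1::nat). tcomp n (a,b) ((\<lambda>_. (w,v)) t) (a',b') ((\<lambda>_. g) t) ((\<lambda>_. h) t) i)" .
  note feq = this
  show ?thesis unfolding trad2_def
  proof (intro exI conjI)
    show "\<forall>t<(1::nat). (\<lambda>_. (w,v)) t \<in> T \<and> trad n (a,b) ((\<lambda>_. (w,v)) t) ((\<lambda>_. h) t) \<and> trad n ((\<lambda>_. (w,v)) t) (a',b') ((\<lambda>_. g) t)"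
      using th tg assms(1) by simp
  qed (rule feq)
qed

lemma Tmem2: assumes "basic_maximal_rigid n T" "(w,v) \<in> T" "2 \<le> n"
  shows "w < n" "1 \<le> v" "v \<le> n - 1"
  using Tmem[OF assms] by auto

lemma irr_gen:
  fixes T :: "ind set"
  assumes mr: "basic_maximal_rigid n T" and n2: "2 \<le> n" and AT: "(a,b) \<in> T" and BT: "(a',b') \<in> T"
    and r: "r = rel n a a'" and r1: "r + 1 \<le> b" and r2: "b \<le> r + b'" and ne: "(a,b) \<noteq> (a',b')"
    and key: "\<And>w v. (w,v) \<in> T \<Longrightarrow> rel n a w + 1 \<le> b \<Longrightarrow> b \<le> rel n a w + v \<Longrightarrow>
       rel n w a' + 1 \<le> v \<Longrightarrow> v \<le> rel n w a' + b' \<Longrightarrow> rel n a w + rel n w a' = r \<Longrightarrow>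
       (w,v) = (a,b) \<or> (w,v) = (a',b')"
  shows "\<exists>f :: nat \<Rightarrow> 'k::field. tmap n (a,b) (a',b') f \<and> f \<noteq> (\<lambda>_. 0) \<and> irreducible_addT n T (a,b) (a',b') f"
proof -
  have ab: "a < n" "1 \<le> b" "b \<le> n - 1" using Tmem2[OF mr AT n2] by auto
  have ab': "a' < n" "1 \<le> b'" "b' \<le> n - 1" using Tmem2[OF mr BT n2] by auto
  define d where "d = b - 1 - r"
  define f where "f = (\<lambda>i. if i = d then 1 else (0::'k))"
  have hb: "hom_basis n (a,b) (a',b') = {d}" unfolding d_def r using ab ab' r1 r2 r by (simp add: hb_rel)
  have tm: "tmap n (a,b) (a',b') f" unfolding tmap_def hb f_def by simp
  have nz: "f \<noteq> (\<lambda>_. 0)" unfolding f_def by (metis one_neq_zero)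
  have tr: "trad n (a,b) (a',b') f" unfolding trad_def using tm ne by simp
  have nt: "\<not> trad2 n T (a,b) (a',b') f"
  proof (rule nontrad2[where d = d])
    show "f d \<noteq> 0" unfolding f_def by simp
  next
    fix W and h g :: "nat \<Rightarrow> 'k" assume W: "W \<in> T" and th: "trad n (a,b) W h" and tg: "trad n W (a',b') g"
    obtain w v where Wd: "W = (w, v)" by fastforce
    have wb: "w < n" "1 \<le> v" "v \<le> n - 1" using Tmem2[OF mr _ n2] W Wd by auto
    define s where "s = rel n a w"
    define t where "t = rel n w a'"
    have val0: "tcomp n (a,b) W (a',b') g h d = (if s + 1 \<le> b \<and> b \<le> s + v \<and> t + 1 \<le> v \<and> v \<le> t + b' \<and>
       (v - 1 - t) + (b - 1 - s) + 1 = v + d then h (b - 1 - s) * g (v - 1 - t) else 0)"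
      unfolding Wd s_def t_def by (rule tcomp_eval) (use ab ab' wb in auto)
    show "tcomp n (a,b) W (a',b') g h d = 0"
    proof (cases "s + 1 \<le> b \<and> b \<le> s + v \<and> t + 1 \<le> v \<and> v \<le> t + b' \<and> (v - 1 - t) + (b - 1 - s) + 1 = v + d")
      case False
      thus ?thesis by (simp only: val0 False if_False)
    next
      case True
      have st: "s + t = r" using True r1 unfolding d_def by arith
      have val: "tcomp n (a,b) W (a',b') g h d = h (b - 1 - s) * g (v - 1 - t)"
        by (simp only: val0 True if_True simp_thms)
      from key[of w v] W Wd True st have "(w,v) = (a,b) \<or> (w,v) = (a',b')" unfolding s_def t_def by auto
      thus ?thesis
      proof
        assume e: "(w,v) = (a,b)"
        hence "s = 0" unfolding s_def using ab by (simp add: rel_self)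
        moreover have "h (b - 1) = 0" using th e Wd unfolding trad_def by simp
        ultimately show ?thesis using val by simp
      next
        assume e: "(w,v) = (a',b')"
        hence "t = 0" unfolding t_def using ab' by (simp add: rel_self)
        moreover have "g (b' - 1) = 0" using tg e Wd unfolding trad_def by simp
        ultimately show ?thesis using val e by simp
      qed
    qed
  qed
  have "irreducible_addT n T (a,b) (a',b') f" unfolding irreducible_addT_def using AT BT tr nt by simp
  thus ?thesis using tm nz by blast
qed

lemma rel_c: "a < n \<Longrightarrow> c + 1 < n \<Longrightarrow> rel n a ((a + c + 1) mod n) = c + 1"
  using rel_shift[of a n "c+1"] by (simp add: add.assoc)

lemma sub_nd: assumes "T_subwing n T X (Some Y) (Some Z)"
  shows "X \<in> T" "Y \<in> T" "Z \<in> T" "\<exists>a b c. X = (a, b) \<and> a < n \<and> 3 \<le> b \<and> b \<le> n - 1 \<and>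
      1 \<le> c \<and> c \<le> b - 2 \<and> Y = (a, c) \<and> Z = ((a + c + 1) mod n, b - c - 1)"
  using assms unfolding T_subwing_def deg_subwing_def nondeg_subwing_def by auto

lemma part_i:
  fixes T :: "ind set"
  assumes mr: "basic_maximal_rigid n T" and n2: "2 \<le> n" and sw: "T_subwing n T X (Some Y) (Some Z)"
  shows "(\<exists>f :: nat \<Rightarrow> 'k::field. tmap n Y X f \<and> f \<noteq> (\<lambda>_. 0) \<and> irreducible_addT n T Y X f) \<and>
         (\<exists>g :: nat \<Rightarrow> 'k::field. tmap n X Z g \<and> g \<noteq> (\<lambda>_. 0) \<and> irreducible_addT n T X Z g)"
proof -
  obtain a b c where e: "X = (a, b)" "a < n" "3 \<le> b" "b \<le> n - 1" "1 \<le> c" "c \<le> b - 2" "Y = (a, c)"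
     "Z = ((a + c + 1) mod n, b - c - 1)" using sub_nd(4)[OF sw] by blast
  have inT: "X \<in> T" "Y \<in> T" "Z \<in> T" using sub_nd[OF sw] by auto
  define z where "z = (a + c + 1) mod n"
  have z: "z < n" "rel n a z = c + 1" unfolding z_def using e n2 rel_c[of a n c] by auto
  have ZT: "(z, b - c - 1) \<in> T" using inT e z_def by simp
  have XT: "(a,b) \<in> T" and YT: "(a,c) \<in> T" using inT e by auto
  have P1: "\<exists>f :: nat \<Rightarrow> 'k::field. tmap n (a,c) (a,b) f \<and> f \<noteq> (\<lambda>_. 0) \<and> irreducible_addT n T (a,c) (a,b) f"
  proof (rule irr_gen[OF mr n2 YT XT refl])
    show "rel n a a + 1 \<le> c" "c \<le> rel n a a + b" "(a, c) \<noteq> (a, b)" using e by (auto simp: rel_self)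
  next
    fix w v assume W: "(w,v) \<in> T" and h: "rel n a w + 1 \<le> c" "c \<le> rel n a w + v"
       "rel n w a + 1 \<le> v" "v \<le> rel n w a + b" "rel n a w + rel n w a = rel n a a"
    have wb: "w < n" "1 \<le> v" "v \<le> n - 1" using Tmem2[OF mr W n2] by auto
    have s0: "rel n a w = 0" "rel n w a = 0" using h e by (auto simp: rel_self)
    hence wa: "w = a" using rel0[OF e(2) wb(1)] by simp
    have cv: "c \<le> v" "v \<le> b" using h s0 by auto
    have cm: "cmp n (rel n w z) v (b - c - 1)" using Text[OF mr W ZT n2] by simp
    hence "\<not> (c < v \<and> v < b)" using z wa unfolding cmp_def by auto
    thus "(w,v) = (a,c) \<or> (w,v) = (a,b)" using cv wa by auto
  qed
  have P2: "\<exists>g :: nat \<Rightarrow> 'k::field. tmap n (a,b) (z, b - c - 1) g \<and> g \<noteq> (\<lambda>_. 0) \<and> irreducible_addT n T (a,b) (z, b - c - 1) g"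
  proof (rule irr_gen[OF mr n2 XT ZT refl])
    show "rel n a z + 1 \<le> b" "b \<le> rel n a z + (b - c - 1)" "(a, b) \<noteq> (z, b - c - 1)" using e z by auto
  next
    fix w v assume W: "(w,v) \<in> T" and h: "rel n a w + 1 \<le> b" "b \<le> rel n a w + v"
       "rel n w z + 1 \<le> v" "v \<le> rel n w z + (b - c - 1)" "rel n a w + rel n w z = rel n a z"
    have wb: "w < n" "1 \<le> v" "v \<le> n - 1" using Tmem2[OF mr W n2] by auto
    define s where "s = rel n a w"
    define t where "t = rel n w z"
    have st: "s + t = c + 1" using h z unfolding s_def t_def by simp
    consider "s = 0" | "s = c + 1" | "0 < s \<and> s < c + 1" using st by linarith
    thus "(w,v) = (a,b) \<or> (w,v) = (z, b - c - 1)"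
    proof cases
      case 1
      hence "w = a" using rel0[OF e(2) wb(1)] s_def by simp
      moreover have "v = b" using h 1 st z unfolding s_def[symmetric] t_def[symmetric] by simp
      ultimately show ?thesis by simp
    next
      case 2
      hence "t = 0" using st by simp
      hence "z = w" using rel0[OF wb(1) z(1)] t_def by simp
      moreover have "v = b - c - 1" using h 2 st z e unfolding s_def[symmetric] t_def[symmetric] by simp
      ultimately show ?thesis by simp
    next
      case 3
      have "v = b - s" using h 3 st z e unfolding s_def[symmetric] t_def[symmetric] by simp
      moreover have "cmp n s c v" using Text[OF mr YT W n2] s_def by simp
      ultimately have False using 3 e unfolding cmp_def by auto
      thus ?thesis ..
    qed
  qed
  show ?thesis using P1 P2 e z_def by simp
qed

lemma part_iv:
  fixes f g :: "nat \<Rightarrow> 'k::field"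
  assumes "T_subwing n T X (Some Y) (Some Z)" "2 \<le> n"
  shows "tcomp n Y X Z g f = (\<lambda>_. 0)"
proof
  fix m
  obtain a b c where e: "X = (a, b)" "a < n" "3 \<le> b" "b \<le> n - 1" "1 \<le> c" "c \<le> b - 2" "Y = (a, c)"
     "Z = ((a + c + 1) mod n, b - c - 1)" using sub_nd(4)[OF assms(1)] by blast
  have z: "(a + c + 1) mod n < n" using assms(2) by simp
  have r: "rel n a a = 0" "rel n a ((a + c + 1) mod n) = c + 1" using e rel_c[of a n c] by (auto simp: rel_self)
  show "tcomp n Y X Z g f m = 0"
  proof -
    have "tcomp n Y X Z g f m = (if rel n a a + 1 \<le> c \<and> c \<le> rel n a a + b \<and>
     rel n a ((a + c + 1) mod n) + 1 \<le> b \<and> b \<le> rel n a ((a + c + 1) mod n) + (b - c - 1) \<and>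
     (b - 1 - rel n a ((a + c + 1) mod n)) + (c - 1 - rel n a a) + 1 = b + m
     then f (c - 1 - rel n a a) * g (b - 1 - rel n a ((a + c + 1) mod n)) else 0)"
      unfolding e by (rule tcomp_eval) (use e z in auto)
    moreover have neq: "(b - 1 - (c + 1)) + (c - 1 - 0) + 1 \<noteq> b + m" using e by arith
    ultimately show ?thesis unfolding r by (simp only: neq simp_thms if_False)
  qed
qed


lemma part_ii_f:
  fixes T :: "ind set"
  assumes mr: "basic_maximal_rigid n T" and n2: "2 \<le> n" and sw: "T_subwing n T X (Some Y) None"
  shows "\<exists>f :: nat \<Rightarrow> 'k::field. tmap n Y X f \<and> f \<noteq> (\<lambda>_. 0) \<and> irreducible_addT n T Y X f"
proof -
  obtain a b where e: "X = (a, b)" "a < n" "2 \<le> b" "b \<le> n - 1" "Y = (a, b - 1)"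
    using sw unfolding T_subwing_def deg_subwing_def by auto
  have XT: "(a,b) \<in> T" and YT: "(a,b-1) \<in> T" using sw e unfolding T_subwing_def by auto
  have "\<exists>f :: nat \<Rightarrow> 'k::field. tmap n (a,b-1) (a,b) f \<and> f \<noteq> (\<lambda>_. 0) \<and> irreducible_addT n T (a,b-1) (a,b) f"
  proof (rule irr_gen[OF mr n2 YT XT refl])
    show "rel n a a + 1 \<le> b - 1" "b - 1 \<le> rel n a a + b" "(a, b - 1) \<noteq> (a, b)" using e by (auto simp: rel_self)
  next
    fix w v assume W: "(w,v) \<in> T" and h: "rel n a w + 1 \<le> b - 1" "b - 1 \<le> rel n a w + v"
       "rel n w a + 1 \<le> v" "v \<le> rel n w a + b" "rel n a w + rel n w a = rel n a a"
    have wb: "w < n" "1 \<le> v" "v \<le> n - 1" using Tmem2[OF mr W n2] by auto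
    have s0: "rel n a w = 0" "rel n w a = 0" using h e by (auto simp: rel_self)
    hence wa: "w = a" using rel0[OF e(2) wb(1)] by simp
    have "b - 1 \<le> v" "v \<le> b" using h s0 by auto
    hence "v = b - 1 \<or> v = b" by linarith
    thus "(w,v) = (a,b-1) \<or> (w,v) = (a,b)" using wa by auto
  qed
  thus ?thesis using e by simp
qed

lemma part_ii_g:
  fixes T :: "ind set"
  assumes mr: "basic_maximal_rigid n T" and n2: "2 \<le> n" and sw: "T_subwing n T X None (Some Z)"
  shows "\<exists>g :: nat \<Rightarrow> 'k::field. tmap n X Z g \<and> g \<noteq> (\<lambda>_. 0) \<and> irreducible_addT n T X Z g"
proof -
  obtain a b where e: "X = (a, b)" "a < n" "2 \<le> b" "b \<le> n - 1" "Z = ((a + 1) mod n, b - 1)"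
    using sw unfolding T_subwing_def deg_subwing_def by auto
  define z where "z = (a + 1) mod n"
  have z: "z < n" "rel n a z = 1" unfolding z_def using e n2 rel_shift[of a n 1] by auto
  have XT: "(a,b) \<in> T" and ZT: "(z,b-1) \<in> T" using sw e z_def unfolding T_subwing_def by auto
  have "\<exists>g :: nat \<Rightarrow> 'k::field. tmap n (a,b) (z,b-1) g \<and> g \<noteq> (\<lambda>_. 0) \<and> irreducible_addT n T (a,b) (z,b-1) g"
  proof (rule irr_gen[OF mr n2 XT ZT refl])
    show "rel n a z + 1 \<le> b" "b \<le> rel n a z + (b - 1)" "(a, b) \<noteq> (z, b - 1)" using e z by auto
  next
    fix w v assume W: "(w,v) \<in> T" and h: "rel n a w + 1 \<le> b" "b \<le> rel n a w + v"
       "rel n w z + 1 \<le> v" "v \<le> rel n w z + (b - 1)" "rel n a w + rel n w z = rel n a z"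
    have wb: "w < n" "1 \<le> v" "v \<le> n - 1" using Tmem2[OF mr W n2] by auto
    define s where "s = rel n a w"
    define t where "t = rel n w z"
    have st: "s + t = 1" using h z unfolding s_def t_def by simp
    hence "s = 0 \<and> t = 1 \<or> s = 1 \<and> t = 0" by linarith
    thus "(w,v) = (a,b) \<or> (w,v) = (z, b - 1)"
    proof
      assume 1: "s = 0 \<and> t = 1"
      hence "w = a" using rel0[OF e(2) wb(1)] s_def by simp
      moreover have "v = b" using h 1 unfolding s_def[symmetric] t_def[symmetric] by simp
      ultimately show ?thesis by simp
    next
      assume 2: "s = 1 \<and> t = 0"
      hence "z = w" using rel0[OF wb(1) z(1)] t_def by simp
      moreover have "v = b - 1" using h 2 unfolding s_def[symmetric] t_def[symmetric] by simp
      ultimately show ?thesis by simp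
    qed
  qed
  thus ?thesis using e z_def by simp
qed

definition cmpi :: "int \<Rightarrow> int \<Rightarrow> int \<Rightarrow> int \<Rightarrow> bool" where
  "cmpi n r b b' \<longleftrightarrow> \<not> (n \<le> r + b' \<and> b' + r + 1 \<le> n + b) \<and>
     \<not> ((if r = 0 then n - 1 else r - 1) + 1 \<le> b \<and> b \<le> (if r = 0 then n - 1 else r - 1) + b')"

lemma core1i:
  fixes n b b' p v :: int
  assumes "2 \<le> n" "1 \<le> b" "b + 2 \<le> b'" "b' \<le> n - 1" "0 \<le> p" "p < n" "1 \<le> v" "v \<le> n - 1"
    "cmpi n p b v" "cmpi n (if p \<le> 0 then 0 - p else 0 + n - p) v b"
    "cmpi n p b' v" "cmpi n (if p \<le> 0 then 0 - p else 0 + n - p) v b'"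
    "\<not> (p = 0 \<and> b < v \<and> v < b')"
  shows "cmpi n (if b + 1 \<le> p then p - (b + 1) else p + n - (b + 1)) (b' - b - 1) v \<and>
         cmpi n (if p \<le> b + 1 then b + 1 - p else b + 1 + n - p) v (b' - b - 1)"
  using assms unfolding cmpi_def by (smt (z3))

lemma core2i:
  fixes n b b' p v r :: int
  assumes "2 \<le> n" "2 \<le> r" "1 \<le> b'" "b = r + b'" "b \<le> n - 1" "0 \<le> p" "p < n" "1 \<le> v" "v \<le> n - 1"
    "cmpi n p b v" "cmpi n (if p \<le> 0 then 0 - p else 0 + n - p) v b"
    "cmpi n (if r \<le> p then p - r else p + n - r) b' v" "cmpi n (if p \<le> r then r - p else r + n - p) v b'"
    "\<not> (0 < p \<and> p < r \<and> v = b - p)"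
  shows "cmpi n p (r - 1) v \<and> cmpi n (if p \<le> 0 then 0 - p else 0 + n - p) v (r - 1)"
  using assms unfolding cmpi_def by (smt (z3))

lemma cmp_int: "1 \<le> n \<Longrightarrow> cmp n r b b' = cmpi (int n) (int r) (int b) (int b')"
  unfolding cmp_def cmpi_def by (cases "r = 0") (auto simp: of_nat_diff)

lemma isub: "x \<le> n \<Longrightarrow> int (if x \<le> y then y - x else y + n - x) = (if int x \<le> int y then int y - int x else int y + int n - int x)"
  by (auto simp: of_nat_diff)

lemma core1:
  fixes n b b' p v :: nat
  assumes "2 \<le> n" "1 \<le> b" "b + 2 \<le> b'" "b' \<le> n - 1" "p < n" "1 \<le> v" "v \<le> n - 1"
    "cmp n p b v" "cmp n (if p \<le> 0 then 0 - p else 0 + n - p) v b"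
    "cmp n p b' v" "cmp n (if p \<le> 0 then 0 - p else 0 + n - p) v b'"
    "\<not> (p = 0 \<and> b < v \<and> v < b')"
  shows "cmp n (if b + 1 \<le> p then p - (b + 1) else p + n - (b + 1)) (b' - b - 1) v \<and>
         cmp n (if p \<le> b + 1 then b + 1 - p else b + 1 + n - p) v (b' - b - 1)"
proof -
  have n1: "1 \<le> n" using assms by simp
  have i1: "int (if p \<le> 0 then 0 - p else 0 + n - p) = (if int p \<le> 0 then 0 - int p else 0 + int n - int p)"
    using isub[of 0 n p] assms by simp
  have i2: "int (if b + 1 \<le> p then p - (b + 1) else p + n - (b + 1)) = (if int b + 1 \<le> int p then int p - (int b + 1) else int p + int n - (int b + 1))"
    using isub[of "b+1" n p] assms by simp
  have i3: "int (if p \<le> b + 1 then b + 1 - p else b + 1 + n - p) = (if int p \<le> int b + 1 then int b + 1 - int p else int b + 1 + int n - int p)"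
    using isub[of p n "b+1"] assms by simp
  have i4: "int (b' - b - 1) = int b' - int b - 1" using assms by simp
  have "cmpi (int n) (if int b + 1 \<le> int p then int p - (int b + 1) else int p + int n - (int b + 1)) (int b' - int b - 1) (int v) \<and>
         cmpi (int n) (if int p \<le> int b + 1 then int b + 1 - int p else int b + 1 + int n - int p) (int v) (int b' - int b - 1)"
  proof (rule core1i)
    show "cmpi (int n) (int p) (int b) (int v)" "cmpi (int n) (int p) (int b') (int v)"
      using assms(8,10) cmp_int[OF n1] by simp_all
    show "cmpi (int n) (if int p \<le> 0 then 0 - int p else 0 + int n - int p) (int v) (int b)"
         "cmpi (int n) (if int p \<le> 0 then 0 - int p else 0 + int n - int p) (int v) (int b')"
      using assms(9,11) cmp_int[OF n1] i1 by simp_all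
  qed (use assms in auto)
  thus ?thesis unfolding cmp_int[OF n1] i2 i3 i4 .
qed

lemma core2:
  fixes n b b' p v r :: nat
  assumes "2 \<le> n" "2 \<le> r" "1 \<le> b'" "b = r + b'" "b \<le> n - 1" "p < n" "1 \<le> v" "v \<le> n - 1"
    "cmp n p b v" "cmp n (if p \<le> 0 then 0 - p else 0 + n - p) v b"
    "cmp n (if r \<le> p then p - r else p + n - r) b' v" "cmp n (if p \<le> r then r - p else r + n - p) v b'"
    "\<not> (0 < p \<and> p < r \<and> v = b - p)"
  shows "cmp n p (r - 1) v \<and> cmp n (if p \<le> 0 then 0 - p else 0 + n - p) v (r - 1)"
proof -
  have n1: "1 \<le> n" using assms by simp
  have i1: "int (if p \<le> 0 then 0 - p else 0 + n - p) = (if int p \<le> 0 then 0 - int p else 0 + int n - int p)"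
    using isub[of 0 n p] assms by simp
  have i2: "int (if r \<le> p then p - r else p + n - r) = (if int r \<le> int p then int p - int r else int p + int n - int r)"
    using isub[of r n p] assms by simp
  have i3: "int (if p \<le> r then r - p else r + n - p) = (if int p \<le> int r then int r - int p else int r + int n - int p)"
    using isub[of p n r] assms by simp
  have i4: "int (r - 1) = int r - 1" using assms by simp
  have "cmpi (int n) (int p) (int r - 1) (int v) \<and> cmpi (int n) (if int p \<le> 0 then 0 - int p else 0 + int n - int p) (int v) (int r - 1)"
  proof (rule core2i[where b' = "int b'" and b = "int b"])
    show "cmpi (int n) (int p) (int b) (int v)" using assms(9) cmp_int[OF n1] by simp
    show "cmpi (int n) (if int p \<le> 0 then 0 - int p else 0 + int n - int p) (int v) (int b)"
      using assms(10) cmp_int[OF n1] i1 by simp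
    show "cmpi (int n) (if int r \<le> int p then int p - int r else int p + int n - int r) (int b') (int v)"
      using assms(11) cmp_int[OF n1] i2 by simp
    show "cmpi (int n) (if int p \<le> int r then int r - int p else int r + int n - int p) (int v) (int b')"
      using assms(12) cmp_int[OF n1] i3 by simp
    show "\<not> (0 < int p \<and> int p < int r \<and> int v = int b - int p)" using assms(13) by auto
  qed (use assms in auto)
  thus ?thesis unfolding cmp_int[OF n1] i1 i4 .
qed

lemma rel_inv: "a < n \<Longrightarrow> u < n \<Longrightarrow> (a + rel n a u) mod n = u"
  by (auto simp: rel_lin)

lemma in_T: assumes mr: "basic_maximal_rigid n T" and v: "valid_ind n Z"
  and zz: "ext1_zero n Z Z" and zu: "\<And>U. U \<in> T \<Longrightarrow> ext1_zero n Z U \<and> ext1_zero n U Z"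
  shows "Z \<in> T"
proof -
  have "rigid_set n (insert Z T)" using mr zz zu unfolding basic_maximal_rigid_def rigid_set_def by blast
  thus ?thesis using mr v unfolding basic_maximal_rigid_def by blast
qed

lemma part_iii:
  fixes T :: "ind set" and f :: "nat \<Rightarrow> 'k::field"
  assumes mr: "basic_maximal_rigid n T" and n2: "2 \<le> n" and irr: "irreducible_addT n T A B f"
  shows "(\<exists>W. T_subwing n T B (Some A) W) \<or> (\<exists>W. T_subwing n T A W (Some B))"
proof -
  obtain a b where Ad: "A = (a,b)" by fastforce
  obtain a' b' where Bd: "B = (a',b')" by fastforce
  have AT: "(a,b) \<in> T" and BT: "(a',b') \<in> T" and tr: "trad n (a,b) (a',b') f"
    and nt: "\<not> trad2 n T (a,b) (a',b') f" using irr Ad Bd unfolding irreducible_addT_def by auto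
  have ab: "a < n" "1 \<le> b" "b \<le> n - 1" using Tmem2[OF mr AT n2] by auto
  have ab': "a' < n" "1 \<le> b'" "b' \<le> n - 1" using Tmem2[OF mr BT n2] by auto
  define r where "r = rel n a a'"
  have tm: "tmap n (a,b) (a',b') f" and rad: "(a,b) \<noteq> (a',b') \<or> f (b - 1) = 0"
    using tr unfolding trad_def by auto
  have fnz: "f \<noteq> (\<lambda>_. 0)"
  proof
    assume f0: "f = (\<lambda>_. 0)"
    have "trad2 n T (a,b) (a',b') f" unfolding trad2_def f0
      by (rule exI[where x = "0::nat"]) simp
    thus False using nt by simp
  qed
  then obtain j where fj: "f j \<noteq> 0" by auto
  have jin: "j \<in> hom_basis n (a,b) (a',b')" using tm fj unfolding tmap_def by auto
  have hb: "hom_basis n (a,b) (a',b') = (if r + 1 \<le> b \<and> b \<le> r + b' then {b - 1 - r} else {})"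
    unfolding r_def using ab ab' by (simp add: hb_rel)
  have cond: "r + 1 \<le> b" "b \<le> r + b'" and jd: "j = b - 1 - r" using jin unfolding hb by (auto split: if_splits)
  have fform: "f = (\<lambda>i. if i = j then f j else 0)"
  proof
    fix i show "f i = (if i = j then f j else 0)" using tm jd unfolding tmap_def hb using cond by auto
  qed
  have ne: "(a,b) \<noteq> (a',b')"
  proof
    assume eq: "(a,b) = (a',b')"
    hence "r = 0" unfolding r_def using ab by (simp add: rel_self)
    hence "j = b - 1" using jd by simp
    thus False using rad eq fj by simp
  qed
  have nofac: False if W: "(w,v) \<in> T" and h: "rel n a w + 1 \<le> b" "b \<le> rel n a w + v"
       "rel n w a' + 1 \<le> v" "v \<le> rel n w a' + b'" "rel n a w + rel n w a' = r"
       and n1: "(w,v) \<noteq> (a,b)" and n2': "(w,v) \<noteq> (a',b')" for w v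
  proof -
    have wb: "w < n" "1 \<le> v" "v \<le> n - 1" using Tmem2[OF mr W n2] by auto
    have "trad2 n T (a,b) (a',b') (\<lambda>i. if i = j then f j else 0)"
      by (rule factor[OF W ab(1) wb(1) ab'(1) ab(2) _ wb(2) _ h(1-4) _ n1 n2']) (use ab wb h cond jd in auto)
    thus False using nt fform by simp
  qed
  have cAB: "cmp n r b b'" using Text[OF mr AT BT n2] r_def by simp
  have cs: "(r = 0 \<and> a' = a \<and> b < b') \<or> (0 < r \<and> b = r + b')"
  proof (cases "r = 0")
    case True
    hence "a' = a" using rel0[OF ab(1) ab'(1)] r_def by simp
    thus ?thesis using True ne cond by auto
  next
    case False
    thus ?thesis using cAB cond unfolding cmp_def by auto
  qed
  thus ?thesis
  proof
    assume c1: "r = 0 \<and> a' = a \<and> b < b'"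
    show ?thesis
    proof (cases "b' = b + 1")
      case True
      have "T_subwing n T B (Some A) None" unfolding T_subwing_def deg_subwing_def Ad Bd
        using AT BT ab ab' c1 True by auto
      thus ?thesis by blast
    next
      case False
      hence bb: "b + 2 \<le> b'" using c1 by simp
      define z where "z = (a + b + 1) mod n"
      have z: "z < n" "rel n a z = b + 1" unfolding z_def using ab ab' bb n2 rel_c[of a n b] by auto
      have ZT: "(z, b' - b - 1) \<in> T"
      proof (rule in_T[OF mr])
        show "valid_ind n (z, b' - b - 1)" unfolding valid_ind_def using z bb by simp
        show "ext1_zero n (z, b' - b - 1) (z, b' - b - 1)"
          using ext_rel[of z n z "b' - b - 1" "b' - b - 1"] z bb ab' by (simp add: rel_self cmp_def)
      next
        fix U assume U: "U \<in> T"
        obtain u v where Ud: "U = (u,v)" by fastforce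
        have uv: "u < n" "1 \<le> v" "v \<le> n - 1" using Tmem2[OF mr _ n2] U Ud by auto
        define p where "p = rel n a u"
        have p: "p < n" unfolding p_def using n2 by (simp add: rel_lt)
        have rua: "rel n u a = (if p \<le> 0 then 0 - p else 0 + n - p)"
          unfolding p_def using rel_sub[OF ab(1) uv(1) ab(1)] by (simp add: rel_self[OF ab(1)])
        have rzu: "rel n z u = (if b + 1 \<le> p then p - (b + 1) else p + n - (b + 1))"
          unfolding p_def using rel_sub[OF ab(1) z(1) uv(1)] z by simp
        have ruz: "rel n u z = (if p \<le> b + 1 then b + 1 - p else b + 1 + n - p)"
          unfolding p_def using rel_sub[OF ab(1) uv(1) z(1)] z by simp
        have h1: "cmp n p b v" using Text[OF mr AT U n2] Ud p_def by simp
        have h2: "cmp n (if p \<le> 0 then 0 - p else 0 + n - p) v b" using Text[OF mr U AT n2] Ud rua by simp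
        have h3: "cmp n p b' v" using Text[OF mr BT U n2] Ud p_def c1 by simp
        have h4: "cmp n (if p \<le> 0 then 0 - p else 0 + n - p) v b'" using Text[OF mr U BT n2] Ud rua c1 by simp
        have h5: "\<not> (p = 0 \<and> b < v \<and> v < b')"
        proof
          assume hp: "p = 0 \<and> b < v \<and> v < b'"
          hence ua: "u = a" using rel0[OF ab(1) uv(1)] p_def by simp
          show False
            by (rule nofac[of u v]) (use U Ud ua hp c1 r_def ab in \<open>auto simp: rel_self\<close>)
        qed
        have "cmp n (rel n z u) (b' - b - 1) v \<and> cmp n (rel n u z) v (b' - b - 1)"
          unfolding rzu ruz by (rule core1[OF n2 ab(2) bb ab'(3) p uv(2,3) h1 h2 h3 h4 h5])
        thus "ext1_zero n (z, b' - b - 1) U \<and> ext1_zero n U (z, b' - b - 1)"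
          unfolding Ud using ext_rel[of z n u "b' - b - 1" v] ext_rel[of u n z v "b' - b - 1"] z uv bb ab' by simp
      qed
      have "T_subwing n T B (Some A) (Some (z, b' - b - 1))"
        unfolding T_subwing_def nondeg_subwing_def Ad Bd
        using AT BT ZT ab ab' c1 bb z_def by auto
      thus ?thesis by blast
    qed
  next
    assume c2: "0 < r \<and> b = r + b'"
    have a'd: "a' = (a + r) mod n" using rel_inv[OF ab(1) ab'(1)] r_def by simp
    show ?thesis
    proof (cases "r = 1")
      case True
      have "T_subwing n T A None (Some B)" unfolding T_subwing_def deg_subwing_def Ad Bd
        using AT BT ab ab' c2 True a'd by auto
      thus ?thesis by blast
    next
      case False
      hence r2: "2 \<le> r" using c2 by simp
      have YT: "(a, r - 1) \<in> T"
      proof (rule in_T[OF mr])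
        show "valid_ind n (a, r - 1)" unfolding valid_ind_def using ab r2 by simp
        show "ext1_zero n (a, r - 1) (a, r - 1)"
          using ext_rel[of a n a "r - 1" "r - 1"] ab c2 r2 by (simp add: rel_self cmp_def)
      next
        fix U assume U: "U \<in> T"
        obtain u v where Ud: "U = (u,v)" by fastforce
        have uv: "u < n" "1 \<le> v" "v \<le> n - 1" using Tmem2[OF mr _ n2] U Ud by auto
        define p where "p = rel n a u"
        have p: "p < n" unfolding p_def using n2 by (simp add: rel_lt)
        have rua: "rel n u a = (if p \<le> 0 then 0 - p else 0 + n - p)"
          unfolding p_def using rel_sub[OF ab(1) uv(1) ab(1)] by (simp add: rel_self[OF ab(1)])
        have rbu: "rel n a' u = (if r \<le> p then p - r else p + n - r)"
          unfolding p_def r_def using rel_sub[OF ab(1) ab'(1) uv(1)] by simp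
        have rub: "rel n u a' = (if p \<le> r then r - p else r + n - p)"
          unfolding p_def r_def using rel_sub[OF ab(1) uv(1) ab'(1)] by simp
        have h1: "cmp n p b v" using Text[OF mr AT U n2] Ud p_def by simp
        have h2: "cmp n (if p \<le> 0 then 0 - p else 0 + n - p) v b" using Text[OF mr U AT n2] Ud rua by simp
        have h3: "cmp n (if r \<le> p then p - r else p + n - r) b' v" using Text[OF mr BT U n2] Ud rbu by simp
        have h4: "cmp n (if p \<le> r then r - p else r + n - p) v b'" using Text[OF mr U BT n2] Ud rub by simp
        have h5: "\<not> (0 < p \<and> p < r \<and> v = b - p)"
        proof
          assume hp: "0 < p \<and> p < r \<and> v = b - p"
          have ua: "u \<noteq> a" using hp p_def ab by (auto simp: rel_self)
          have t: "rel n u a' = r - p" using rub hp by simp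
          show False
            by (rule nofac[of u v]) (use U Ud ua hp c2 t p_def ab ab' in auto)
        qed
        have "cmp n p (r - 1) v \<and> cmp n (if p \<le> 0 then 0 - p else 0 + n - p) v (r - 1)"
          by (rule core2[OF n2 r2 ab'(2) _ _ p uv(2,3) h1 h2 h3 h4 h5]) (use c2 ab in auto)
        thus "ext1_zero n (a, r - 1) U \<and> ext1_zero n U (a, r - 1)"
          unfolding Ud using ext_rel[of a n u "r - 1" v] ext_rel[of u n a v "r - 1"] ab uv c2 r2 rua p_def by simp
      qed
      have e3: "(a + (r - 1) + 1) mod n = a'" using a'd r2 by simp
      have "T_subwing n T A (Some (a, r - 1)) (Some B)"
        unfolding T_subwing_def nondeg_subwing_def Ad Bd
        using AT BT YT ab ab' c2 r2 e3 by auto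
      thus ?thesis by blast
    qed
  qed
qed

theorem lemma2p8:
  fixes n :: nat and T :: "ind set"
  assumes alg_closed: "\<forall>p :: 'k::field poly. degree p > 0 \<longrightarrow> (\<exists>x. poly p x = 0)"
    and n2: "2 \<le> n"
    and maxrig: "basic_maximal_rigid n T"
  shows
   "(\<forall>X Y Z. T_subwing n T X (Some Y) (Some Z) \<longrightarrow>
       (\<exists>f :: nat \<Rightarrow> 'k. tmap n Y X f \<and> f \<noteq> (\<lambda>_. 0) \<and> irreducible_addT n T Y X f) \<and>
       (\<exists>g :: nat \<Rightarrow> 'k. tmap n X Z g \<and> g \<noteq> (\<lambda>_. 0) \<and> irreducible_addT n T X Z g))
  \<and> (\<forall>X Y. T_subwing n T X (Some Y) None \<longrightarrow>
       (\<exists>f :: nat \<Rightarrow> 'k. tmap n Y X f \<and> f \<noteq> (\<lambda>_. 0) \<and> irreducible_addT n T Y X f))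
  \<and> (\<forall>X Z. T_subwing n T X None (Some Z) \<longrightarrow>
       (\<exists>g :: nat \<Rightarrow> 'k. tmap n X Z g \<and> g \<noteq> (\<lambda>_. 0) \<and> irreducible_addT n T X Z g))
  \<and> (\<forall>A B (f :: nat \<Rightarrow> 'k). A \<in> T \<and> B \<in> T \<and> irreducible_addT n T A B f \<longrightarrow>
       (\<exists>W. T_subwing n T B (Some A) W) \<or> (\<exists>W. T_subwing n T A W (Some B)))
  \<and> (\<forall>X Y Z. T_subwing n T X (Some Y) (Some Z) \<longrightarrow>
       (\<forall>(f :: nat \<Rightarrow> 'k) g. tmap n Y X f \<and> tmap n X Z g \<longrightarrow> tcomp n Y X Z g f = (\<lambda>_. 0)))"
proof (intro conjI)
  show "\<forall>X Y Z. T_subwing n T X (Some Y) (Some Z) \<longrightarrow>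
       (\<exists>f :: nat \<Rightarrow> 'k. tmap n Y X f \<and> f \<noteq> (\<lambda>_. 0) \<and> irreducible_addT n T Y X f) \<and>
       (\<exists>g :: nat \<Rightarrow> 'k. tmap n X Z g \<and> g \<noteq> (\<lambda>_. 0) \<and> irreducible_addT n T X Z g)"
    using part_i[OF maxrig n2] by blast
  show "\<forall>X Y. T_subwing n T X (Some Y) None \<longrightarrow>
       (\<exists>f :: nat \<Rightarrow> 'k. tmap n Y X f \<and> f \<noteq> (\<lambda>_. 0) \<and> irreducible_addT n T Y X f)"
    using part_ii_f[OF maxrig n2] by blast
  show "\<forall>X Z. T_subwing n T X None (Some Z) \<longrightarrow>
       (\<exists>g :: nat \<Rightarrow> 'k. tmap n X Z g \<and> g \<noteq> (\<lambda>_. 0) \<and> irreducible_addT n T X Z g)"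
    using part_ii_g[OF maxrig n2] by blast
  show "\<forall>A B (f :: nat \<Rightarrow> 'k). A \<in> T \<and> B \<in> T \<and> irreducible_addT n T A B f \<longrightarrow>
       (\<exists>W. T_subwing n T B (Some A) W) \<or> (\<exists>W. T_subwing n T A W (Some B))"
    using part_iii[OF maxrig n2] by blast
  show "\<forall>X Y Z. T_subwing n T X (Some Y) (Some Z) \<longrightarrow>
       (\<forall>(f :: nat \<Rightarrow> 'k) g. tmap n Y X f \<and> tmap n X Z g \<longrightarrow> tcomp n Y X Z g f = (\<lambda>_. 0))"
    using part_iv[OF _ n2] by blast
qed

end
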